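(* Let $d\ge1$, $p\ge1$, $\sigma>0$, $\alpha>0$, and let $F$, $U$, $g$, $\Phi$ be as in the context, satisfying the standing assumption there. Assume moreover that $\Phi:\mathcal P_p(\mathbb R^d)\to\mathcal P_p(\mathbb R^d)$ admits a unique fixed point, and that $m_0\in\mathcal P_{p'}(\mathbb R^d)$ for some $p'>p$ with $H(m_0|g)<+\infty$. Let $(m_t)_{t\ge0}$ be a solution in $\mathcal W_p$ of the entropic fictitious play $\frac{dm_t}{dt}=\alpha(\hat m_t-m_t)$ with initial value $m_0$, with densities $m_t(\cdot)$, $\hat m_t(\cdot)$. Fix $s>0$. Then there exist integrable functions $f,g_0:\mathbb R^d\to\mathbb R$ such that for every $t\in[s,+\infty)$ and every $x\in\mathbb R^d$, \[ g_0(x)\le\log\frac{m_t(x)}{e^{-U(x)}}\bigl(\hat m_t(x)-m_t(x)\bigr)\le f(x). \]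
   Context: $\mathcal P(\mathbb R^d)$ denotes the Borel probability measures on $\mathbb R^d$, $\mathcal P_q(\mathbb R^d)$ those with finite $q$-th moment, $\mathcal W_p$ the $p$-Wasserstein distance (also the metric space $(\mathcal P_p(\mathbb R^d),\mathcal W_p)$). Standing assumption: (a) $F:\mathcal P(\mathbb R^d)\to\mathbb R$ is non-negative and there is a continuous function $\frac{\delta F}{\delta m}:\mathcal P(\mathbb R^d)\times\mathbb R^d\to\mathbb R$ such that for all $m_0,m_1$, $F(m_1)-F(m_0)=\int_0^1\int\frac{\delta F}{\delta m}(m_\lambda,x)\,(m_1-m_0)(dx)\,d\lambda$ with $m_\lambda=(1-\lambda)m_0+\lambda m_1$; and there are $L_F,M_F>0$ with $|\frac{\delta F}{\delta m}(m,x)-\frac{\delta F}{\delta m}(m',x')|\le L_F(\mathcal W_p(m,m')+|x-x'|)$ and $|\frac{\delta F}{\delta m}(m,x)|\le M_F$ for all $m,m',x,x'$. (b) $U:\mathbb R^d\to\mathbb R$ is measurable, $\int e^{-U}dx=1$, $\operatorname{ess\,inf}U>-\infty$, $\liminf_{|x|\to\infty}U(x)/|x|^p>0$. $g$ has density $e^{-U}$; $H(\mu|g)=\int\log\frac{d\mu}{dg}d\mu$ if $\mu\ll g$, $+\infty$ otherwise. For $m\in\mathcal P_p(\mathbb R^d)$, $\hat m=\Phi(m)$ is the probability measure with density $\hat m(x)\propto\exp(-\frac{2}{\sigma^2}\frac{\delta F}{\delta m}(m,x)-U(x))$ (the unique minimizer of $\mu\mapsto\int\frac{\delta F}{\delta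 m}(m,x)\mu(dx)+\frac{\sigma^2}{2}H(\mu|g)$). A solution in $\mathcal W_p$ is a flow $(m_t)_{t\ge0}\in C([0,+\infty);\mathcal W_p)$ satisfying $\frac{dm_t}{dt}=\alpha(\hat m_t-m_t)$, $\hat m_t:=\Phi(m_t)$, in the sense of distributions; its density is $m_t(x)=\int_0^t\alpha e^{-\alpha(t-u)}\hat m_u(x)\,du+e^{-\alpha t}m_0(x)$. *)

theory Defs
  imports "HOL-Probability.Probability"
begin

text \<open>Borel probability measures on the Euclidean space 'a (playing the role of R^d, d = DIM('a)).\<close>
definition probs :: "'a::euclidean_space measure set" where
  "probs = {M. prob_space M \<and> sets M = sets borel}"

definition probs_q :: "real \<Rightarrow> 'a::euclidean_space measure set" where
  "probs_q q = {M \<in> probs. (\<integral>\<^sup>+ x. ennreal (norm x powr q) \<partial>M) < \<infinity>}"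

definition couplings :: "'a::euclidean_space measure \<Rightarrow> 'a measure \<Rightarrow> ('a \<times> 'a) measure set" where
  "couplings \<mu> \<nu> = {\<pi>. prob_space \<pi> \<and> sets \<pi> = sets (borel \<Otimes>\<^sub>M borel)
      \<and> distr \<pi> borel fst = \<mu> \<and> distr \<pi> borel snd = \<nu>}"

definition wass_cost :: "real \<Rightarrow> 'a::euclidean_space measure \<Rightarrow> 'a measure \<Rightarrow> ennreal" where
  "wass_cost p \<mu> \<nu> = (INF \<pi>\<in>couplings \<mu> \<nu>. \<integral>\<^sup>+ z. ennreal (dist (fst z) (snd z) powr p) \<partial>\<pi>)"

text \<open>p-Wasserstein distance (meaningful when wass_cost is finite, e.g. on P_p).\<close>
definition Wp :: "real \<Rightarrow> 'a::euclidean_space measure \<Rightarrow> 'a measure \<Rightarrow> real" where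
  "Wp p \<mu> \<nu> = enn2real (wass_cost p \<mu> \<nu>) powr (1 / p)"

definition weak_conv_seq :: "(nat \<Rightarrow> 'a::euclidean_space measure) \<Rightarrow> 'a measure \<Rightarrow> bool" where
  "weak_conv_seq Ms M \<longleftrightarrow> (\<forall>\<phi>::'a \<Rightarrow> real. continuous_on UNIV \<phi> \<and> bounded (range \<phi>) \<longrightarrow>
      (\<lambda>n. \<integral>x. \<phi> x \<partial>(Ms n)) \<longlonglongrightarrow> (\<integral>x. \<phi> x \<partial>M))"

definition mix :: "real \<Rightarrow> 'a::euclidean_space measure \<Rightarrow> 'a measure \<Rightarrow> 'a measure" where
  "mix l m0 m1 = measure_of UNIV (sets borel)
      (\<lambda>A. ennreal (1 - l) * emeasure m0 A + ennreal l * emeasure m1 A)"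

definition standing_F :: "real \<Rightarrow> ('a::euclidean_space measure \<Rightarrow> real) \<Rightarrow> ('a measure \<Rightarrow> 'a \<Rightarrow> real) \<Rightarrow> bool" where
  "standing_F p F dF \<longleftrightarrow>
     (\<forall>m\<in>probs. F m \<ge> 0)
   \<and> (\<forall>Ms m xs x. (\<forall>n. Ms n \<in> probs) \<and> m \<in> probs \<and> weak_conv_seq Ms m \<and> xs \<longlonglongrightarrow> x
        \<longrightarrow> (\<lambda>n. dF (Ms n) (xs n)) \<longlonglongrightarrow> dF m x)
   \<and> (\<forall>m0\<in>probs. \<forall>m1\<in>probs.
        F m1 - F m0 = (LINT l:{0..1}|lborel.
           (\<integral>x. dF (mix l m0 m1) x \<partial>m1) - (\<integral>x. dF (mix l m0 m1) x \<partial>m0)))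
   \<and> (\<exists>L M. L > 0 \<and> M > 0
        \<and> (\<forall>m\<in>probs. \<forall>m'\<in>probs. \<forall>x x'. wass_cost p m m' < \<infinity> \<longrightarrow>
              \<bar>dF m x - dF m' x'\<bar> \<le> L * (Wp p m m' + dist x x'))
        \<and> (\<forall>m\<in>probs. \<forall>x. \<bar>dF m x\<bar> \<le> M))"

definition standing_U :: "real \<Rightarrow> ('a::euclidean_space \<Rightarrow> real) \<Rightarrow> bool" where
  "standing_U p U \<longleftrightarrow>
     U \<in> borel_measurable lborel
   \<and> (\<integral>\<^sup>+ x. ennreal (exp (- U x)) \<partial>lborel) = 1
   \<and> (\<exists>c. AE x in lborel. U x \<ge> c)
   \<and> (\<exists>c>0. \<forall>\<^sub>F x in at_infinity. U x / norm x powr p \<ge> c)"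

definition gmeas :: "('a::euclidean_space \<Rightarrow> real) \<Rightarrow> 'a measure" where
  "gmeas U = density lborel (\<lambda>x. ennreal (exp (- U x)))"

definition finite_rel_entropy :: "'a::euclidean_space measure \<Rightarrow> 'a measure \<Rightarrow> bool" where
  "finite_rel_entropy \<mu> g \<longleftrightarrow> absolutely_continuous g \<mu>
     \<and> integrable \<mu> (\<lambda>x. ln (enn2real (RN_deriv g \<mu> x)))"

definition Phi_dens :: "real \<Rightarrow> ('a::euclidean_space measure \<Rightarrow> 'a \<Rightarrow> real) \<Rightarrow> ('a \<Rightarrow> real)
    \<Rightarrow> 'a measure \<Rightarrow> 'a \<Rightarrow> real" where
  "Phi_dens \<sigma> dF U m x = exp (- 2 / \<sigma>\<^sup>2 * dF m x - U x)
      / (\<integral>y. exp (- 2 / \<sigma>\<^sup>2 * dF m y - U y) \<partial>lborel)"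

definition Phi :: "real \<Rightarrow> ('a::euclidean_space measure \<Rightarrow> 'a \<Rightarrow> real) \<Rightarrow> ('a \<Rightarrow> real)
    \<Rightarrow> 'a measure \<Rightarrow> 'a measure" where
  "Phi \<sigma> dF U m = density lborel (\<lambda>x. ennreal (Phi_dens \<sigma> dF U m x))"

text \<open>Solution in W_p of dm/dt = alpha (Phi(m_t) - m_t), in the weak (distributional) sense,
  written in integrated form against continuous compactly supported test functions.\<close>
definition efp_solution :: "real \<Rightarrow> real \<Rightarrow> real \<Rightarrow> ('a::euclidean_space measure \<Rightarrow> 'a \<Rightarrow> real)
    \<Rightarrow> ('a \<Rightarrow> real) \<Rightarrow> (real \<Rightarrow> 'a measure) \<Rightarrow> bool" where
  "efp_solution p \<sigma> \<alpha> dF U m \<longleftrightarrow>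
     (\<forall>t\<ge>0. m t \<in> probs_q p)
   \<and> (\<forall>t\<ge>0. \<forall>\<epsilon>>0. \<exists>\<delta>>0. \<forall>t'\<ge>0. \<bar>t' - t\<bar> < \<delta> \<longrightarrow> Wp p (m t') (m t) < \<epsilon>)
   \<and> (\<forall>\<phi>::'a \<Rightarrow> real. continuous_on UNIV \<phi> \<and> compact (closure {x. \<phi> x \<noteq> 0}) \<longrightarrow>
        (\<forall>t\<ge>0. (\<integral>x. \<phi> x \<partial>m t) - (\<integral>x. \<phi> x \<partial>m 0)
            = (LINT u:{0..t}|lborel. \<alpha> * ((\<integral>x. \<phi> x \<partial>Phi \<sigma> dF U (m u)) - (\<integral>x. \<phi> x \<partial>m u)))))"

text \<open>The density of m_t given by the Duhamel formula (rho0 = density of m_0).\<close>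
definition efp_dens :: "real \<Rightarrow> real \<Rightarrow> ('a::euclidean_space measure \<Rightarrow> 'a \<Rightarrow> real) \<Rightarrow> ('a \<Rightarrow> real)
    \<Rightarrow> (real \<Rightarrow> 'a measure) \<Rightarrow> ('a \<Rightarrow> real) \<Rightarrow> real \<Rightarrow> 'a \<Rightarrow> real" where
  "efp_dens \<sigma> \<alpha> dF U m \<rho>0 t x =
     (LINT u:{0..t}|lborel. \<alpha> * exp (- \<alpha> * (t - u)) * Phi_dens \<sigma> dF U (m u) x)
     + exp (- \<alpha> * t) * \<rho>0 x"

end

theory Submission
  imports Defs
begin

lemma powr_sum_le:
  fixes a b p :: real
  assumes "a \<ge> 0" "b \<ge> 0" "p > 0"
  shows "(a + b) powr p \<le> 2 powr p * (a powr p + b powr p)"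
proof -
  have "(a + b) powr p \<le> (2 * max a b) powr p"
    using assms by (intro powr_mono2) auto
  also have "\<dots> = 2 powr p * max a b powr p" using assms by (simp add: powr_mult)
  also have "max a b powr p \<le> a powr p + b powr p"
    by (cases "a \<le> b") (auto simp: max_def)
  hence "2 powr p * max a b powr p \<le> 2 powr p * (a powr p + b powr p)" by simp
  finally show ?thesis .
qed

lemma wass_fin:
  fixes \<mu> \<nu> :: "'a::euclidean_space measure"
  assumes "\<mu> \<in> probs_q p" "\<nu> \<in> probs_q p" "p > 0"
  shows "wass_cost p \<mu> \<nu> < \<infinity>"
proof -
  have pm: "prob_space \<mu>" "sets \<mu> = sets borel" and pn: "prob_space \<nu>" "sets \<nu> = sets borel"
    using assms unfolding probs_q_def probs_def by auto
  have fm: "(\<integral>\<^sup>+ x. ennreal (norm x powr p) \<partial>\<mu>) < \<infinity>" and fn: "(\<integral>\<^sup>+ x. ennreal (norm x powr p) \<partial>\<nu>) < \<infinity>"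
    using assms unfolding probs_q_def by auto
  interpret P: pair_prob_space \<mu> \<nu> using pm pn by (simp add: pair_prob_space_def pair_sigma_finite_def prob_space_imp_sigma_finite)
  let ?\<pi> = "\<mu> \<Otimes>\<^sub>M \<nu>"
  have sp: "sets ?\<pi> = sets (borel \<Otimes>\<^sub>M borel)"
    using pm pn by (intro sets_pair_measure_cong) auto
  have d1: "distr ?\<pi> borel fst = \<mu>"
  proof -
    have "distr ?\<pi> borel fst = distr ?\<pi> \<mu> fst"
      using pm by (intro distr_cong) auto
    also have "\<dots> = \<mu>" using pn by (intro prob_space.distr_pair_fst) auto
    finally show ?thesis .
  qed
  have d2: "distr ?\<pi> borel snd = \<nu>"
  proof (rule measure_eqI)
    show "sets (distr ?\<pi> borel snd) = sets \<nu>" using pn by simp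
  next
    fix A assume A: "A \<in> sets (distr ?\<pi> borel snd)"
    hence A': "A \<in> sets \<nu>" using pn by simp
    have spm: "space \<mu> = UNIV" "space \<nu> = UNIV" using sets_eq_imp_space_eq[OF pm(2)] sets_eq_imp_space_eq[OF pn(2)] by simp_all
    have ms: "snd \<in> measurable ?\<pi> borel" by (subst measurable_cong_sets[OF sp refl]) simp
    have "emeasure (distr ?\<pi> borel snd) A = emeasure ?\<pi> (snd -` A \<inter> space ?\<pi>)"
      using A by (intro emeasure_distr ms) simp
    also have "snd -` A \<inter> space ?\<pi> = space \<mu> \<times> A" by (auto simp: space_pair_measure spm)
    finally have "emeasure (distr ?\<pi> borel snd) A = emeasure ?\<pi> (space \<mu> \<times> A)" .
    also have "\<dots> = emeasure \<nu> A"
      using A' by (subst P.M2.emeasure_pair_measure_Times) (auto simp: prob_space.emeasure_space_1[OF pm(1)])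
    finally show "emeasure (distr ?\<pi> borel snd) A = emeasure \<nu> A" .
  qed
  have cpl: "?\<pi> \<in> couplings \<mu> \<nu>"
    unfolding couplings_def using sp d1 d2 P.prob_space_axioms by auto
  have "wass_cost p \<mu> \<nu> \<le> (\<integral>\<^sup>+ z. ennreal (dist (fst z) (snd z) powr p) \<partial>?\<pi>)"
    unfolding wass_cost_def using cpl by (rule INF_lower)
  also have "\<dots> \<le> (\<integral>\<^sup>+ z. ennreal (2 powr p) * ennreal (norm (fst z) powr p) + ennreal (2 powr p) * ennreal (norm (snd z) powr p) \<partial>?\<pi>)"
  proof (rule nn_integral_mono)
    fix z :: "'a \<times> 'a"
    have "dist (fst z) (snd z) powr p \<le> (norm (fst z) + norm (snd z)) powr p"
      using assms(3) by (intro powr_mono2) (auto simp: dist_norm norm_triangle_ineq4)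
    also have "\<dots> \<le> 2 powr p * (norm (fst z) powr p + norm (snd z) powr p)"
      using assms(3) by (intro powr_sum_le) auto
    finally show "ennreal (dist (fst z) (snd z) powr p) \<le> ennreal (2 powr p) * ennreal (norm (fst z) powr p) + ennreal (2 powr p) * ennreal (norm (snd z) powr p)"
      by (simp add: ennreal_mult[symmetric] ennreal_plus[symmetric] distrib_left del: ennreal_plus)
  qed
  also have "\<dots> = ennreal (2 powr p) * (\<integral>\<^sup>+ z. ennreal (norm (fst z) powr p) \<partial>?\<pi>) + ennreal (2 powr p) * (\<integral>\<^sup>+ z. ennreal (norm (snd z) powr p) \<partial>?\<pi>)"
    by (subst nn_integral_add) (auto simp: nn_integral_cmult measurable_cong_sets[OF sp refl])
  also have "(\<integral>\<^sup>+ z. ennreal (norm (fst z) powr p) \<partial>?\<pi>) = (\<integral>\<^sup>+ x. ennreal (norm x powr p) \<partial>\<mu>)"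
    by (subst d1[symmetric], subst nn_integral_distr) (auto simp: measurable_cong_sets[OF sp refl])
  also have "(\<integral>\<^sup>+ z. ennreal (norm (snd z) powr p) \<partial>?\<pi>) = (\<integral>\<^sup>+ x. ennreal (norm x powr p) \<partial>\<nu>)"
    by (subst d2[symmetric], subst nn_integral_distr) (auto simp: measurable_cong_sets[OF sp refl])
  also have "ennreal (2 powr p) * (\<integral>\<^sup>+ x. ennreal (norm x powr p) \<partial>\<mu>) + ennreal (2 powr p) * (\<integral>\<^sup>+ x. ennreal (norm x powr p) \<partial>\<nu>) < \<infinity>"
    using fm fn by (simp add: ennreal_mult_less_top)
  finally show ?thesis .
qed

lemma dF_cont:
  fixes dF :: "'a::euclidean_space measure \<Rightarrow> 'a \<Rightarrow> real"
  assumes "standing_F p F dF" "\<mu> \<in> probs"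
  shows "continuous_on UNIV (dF \<mu>)"
proof -
  have seq: "\<And>Ms m xs x. (\<forall>n. Ms n \<in> probs) \<and> m \<in> probs \<and> weak_conv_seq Ms m \<and> xs \<longlonglongrightarrow> x
        \<Longrightarrow> (\<lambda>n. dF (Ms n) (xs n)) \<longlonglongrightarrow> dF m x"
    using assms(1) unfolding standing_F_def by blast
  have wc: "weak_conv_seq (\<lambda>n. \<mu>) \<mu>" unfolding weak_conv_seq_def by simp
  show ?thesis
  proof (intro continuous_at_imp_continuous_on ballI continuous_at_sequentiallyI)
    fix x and u :: "nat \<Rightarrow> 'a" assume "u \<longlonglongrightarrow> x"
    then show "(\<lambda>n. dF \<mu> (u n)) \<longlonglongrightarrow> dF \<mu> x"
      using seq[of "\<lambda>n. \<mu>" \<mu> u x] wc assms(2) by simp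
  qed
qed

lemma expU:
  assumes "standing_U p U"
  shows "U \<in> borel_measurable borel" "integrable lborel (\<lambda>x. exp (- U x))"
        "(\<integral>x. exp (- U x) \<partial>lborel) = 1"
proof -
  have m: "U \<in> borel_measurable lborel" and n: "(\<integral>\<^sup>+ x. ennreal (exp (- U x)) \<partial>lborel) = 1"
    using assms unfolding standing_U_def by auto
  then show "U \<in> borel_measurable borel" by simp
  have m2: "(\<lambda>x. exp (- U x)) \<in> borel_measurable lborel" using m by measurable
  show "integrable lborel (\<lambda>x. exp (- U x))"
    by (rule integrableI_nonneg[OF m2]) (auto simp: n)
  show "(\<integral>x. exp (- U x) \<partial>lborel) = 1"
    by (subst integral_eq_nn_integral[OF m2]) (auto simp: n)
qed

lemma Zb:
  fixes D :: "'a::euclidean_space \<Rightarrow> real"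
  assumes U: "standing_U p U" and D: "D \<in> borel_measurable borel" and b: "\<And>y. \<bar>D y\<bar> \<le> M"
  shows "integrable lborel (\<lambda>y. exp (c * D y - U y))"
    "exp (- \<bar>c\<bar> * M) \<le> (\<integral>y. exp (c * D y - U y) \<partial>lborel)"
    "(\<integral>y. exp (c * D y - U y) \<partial>lborel) \<le> exp (\<bar>c\<bar> * M)"
proof -
  note E = expU[OF U]
  have pt: "exp (- \<bar>c\<bar> * M) * exp (- U y) \<le> exp (c * D y - U y) \<and> exp (c * D y - U y) \<le> exp (\<bar>c\<bar> * M) * exp (- U y)" for y
  proof -
    have "\<bar>c * D y\<bar> \<le> \<bar>c\<bar> * M" unfolding abs_mult by (rule mult_left_mono[OF b]) simp
    then have "- \<bar>c\<bar> * M - U y \<le> c * D y - U y \<and> c * D y - U y \<le> \<bar>c\<bar> * M - U y" by auto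
    then show ?thesis by (simp add: exp_add[symmetric])
  qed
  have meas: "(\<lambda>y. exp (c * D y - U y)) \<in> borel_measurable lborel" using D E(1) by simp
  show I: "integrable lborel (\<lambda>y. exp (c * D y - U y))"
  proof (rule Bochner_Integration.integrable_bound[OF _ meas])
    show "integrable lborel (\<lambda>y. exp (\<bar>c\<bar> * M) * exp (- U y))" using E(2) by simp
    show "AE x in lborel. norm (exp (c * D x - U x)) \<le> norm (exp (\<bar>c\<bar> * M) * exp (- U x))"
      using pt by auto
  qed
  have "exp (- \<bar>c\<bar> * M) = (\<integral>y. exp (- \<bar>c\<bar> * M) * exp (- U y) \<partial>lborel)" using E(3) by simp
  also have "\<dots> \<le> (\<integral>y. exp (c * D y - U y) \<partial>lborel)"
    using pt by (intro integral_mono integrable_mult_right E(2) I) auto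
  finally show "exp (- \<bar>c\<bar> * M) \<le> (\<integral>y. exp (c * D y - U y) \<partial>lborel)" .
  have "(\<integral>y. exp (c * D y - U y) \<partial>lborel) \<le> (\<integral>y. exp (\<bar>c\<bar> * M) * exp (- U y) \<partial>lborel)"
    using pt by (intro integral_mono integrable_mult_right E(2) I) auto
  also have "\<dots> = exp (\<bar>c\<bar> * M)" using E(3) by simp
  finally show "(\<integral>y. exp (c * D y - U y) \<partial>lborel) \<le> exp (\<bar>c\<bar> * M)" .
qed

lemma exp_sand:
  fixes a B u :: real
  assumes "\<bar>a\<bar> \<le> B"
  shows "exp (- B) * exp (- u) \<le> exp (a - u)" "exp (a - u) \<le> exp B * exp (- u)"
proof -
  have "- B - u \<le> a - u" "a - u \<le> B - u" using assms by auto
  then show "exp (- B) * exp (- u) \<le> exp (a - u)" "exp (a - u) \<le> exp B * exp (- u)"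
    by (simp_all add: exp_add[symmetric])
qed

lemma Phib:
  fixes \<mu> :: "'a::euclidean_space measure"
  assumes U: "standing_U p U" and D: "dF \<mu> \<in> borel_measurable borel" and b: "\<And>y. \<bar>dF \<mu> y\<bar> \<le> M"
  shows "exp (- 2 * \<bar>- 2 / \<sigma>\<^sup>2\<bar> * M) * exp (- U x) \<le> Phi_dens \<sigma> dF U \<mu> x"
        "Phi_dens \<sigma> dF U \<mu> x \<le> exp (2 * \<bar>- 2 / \<sigma>\<^sup>2\<bar> * M) * exp (- U x)"
proof -
  let ?c = "- 2 / \<sigma>\<^sup>2"
  let ?Z = "\<integral>y. exp (?c * dF \<mu> y - U y) \<partial>lborel"
  note Z = Zb[OF U D b, of ?c]
  have Zp: "?Z > 0" using Z(2) by (meson exp_gt_zero less_le_trans)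
  have "\<bar>?c * dF \<mu> x\<bar> \<le> \<bar>?c\<bar> * M" unfolding abs_mult by (rule mult_left_mono[OF b]) simp
  note nb0 = exp_sand[OF this, of "U x"]
  have nb: "exp (- \<bar>?c\<bar> * M) * exp (- U x) \<le> exp (?c * dF \<mu> x - U x)"
       "exp (?c * dF \<mu> x - U x) \<le> exp (\<bar>?c\<bar> * M) * exp (- U x)"
    using nb0 by simp_all
  have eq: "Phi_dens \<sigma> dF U \<mu> x = exp (?c * dF \<mu> x - U x) / ?Z" unfolding Phi_dens_def by simp
  have "exp (- 2 * \<bar>?c\<bar> * M) * exp (- U x) = (exp (- \<bar>?c\<bar> * M) * exp (- U x)) / exp (\<bar>?c\<bar> * M)"
    by (simp add: exp_diff[symmetric] exp_add[symmetric] field_simps)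
  also have "\<dots> \<le> exp (?c * dF \<mu> x - U x) / ?Z"
    using nb(1) Z(3) Zp by (intro frac_le) auto
  finally show "exp (- 2 * \<bar>?c\<bar> * M) * exp (- U x) \<le> Phi_dens \<sigma> dF U \<mu> x" using eq by simp
  have "exp (?c * dF \<mu> x - U x) / ?Z \<le> (exp (\<bar>?c\<bar> * M) * exp (- U x)) / exp (- \<bar>?c\<bar> * M)"
    using nb(2) Z(2) Zp by (intro frac_le) auto
  also have "\<dots> = exp (2 * \<bar>?c\<bar> * M) * exp (- U x)"
    by (simp add: exp_diff[symmetric] exp_add[symmetric] field_simps exp_minus)
  finally show "Phi_dens \<sigma> dF U \<mu> x \<le> exp (2 * \<bar>- 2 / \<sigma>\<^sup>2\<bar> * M) * exp (- U x)" using eq by simp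
qed

lemma cont_h:
  fixes D :: "real \<Rightarrow> 'a::euclidean_space \<Rightarrow> real" and W :: "real \<Rightarrow> real \<Rightarrow> real"
  assumes U: "standing_U p U"
    and Dm: "\<And>u. u \<ge> 0 \<Longrightarrow> D u \<in> borel_measurable borel"
    and Db: "\<And>u y. u \<ge> 0 \<Longrightarrow> \<bar>D u y\<bar> \<le> M"
    and Lip: "\<And>u v y. u \<ge> 0 \<Longrightarrow> v \<ge> 0 \<Longrightarrow> \<bar>D v y - D u y\<bar> \<le> L * W v u"
    and L: "L \<ge> 0"
    and Wt: "\<And>u. u \<ge> 0 \<Longrightarrow> ((\<lambda>v. W v u) \<longlongrightarrow> 0) (at u within {0..})"
  shows "continuous_on {0..} (\<lambda>u. exp (c * D u x - U x) / (\<integral>y. exp (c * D u y - U y) \<partial>lborel))"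
  unfolding continuous_on_def
proof (intro ballI)
  fix u :: real assume "u \<in> {0..}"
  then have u: "u \<ge> 0" by simp
  let ?F = "at u within {0..}"
  let ?Z = "\<lambda>v. (\<integral>y. exp (c * D v y - U y) \<partial>lborel)"
  have ev: "eventually (\<lambda>v. v \<ge> 0) ?F" by (simp add: eventually_at_filter)
  have LW: "((\<lambda>v. L * W v u) \<longlongrightarrow> 0) ?F" using tendsto_mult_right_zero[OF Wt[OF u], of L] by simp
  have num: "((\<lambda>v. D v x) \<longlongrightarrow> D u x) ?F"
  proof (rule LIM_zero_cancel, rule Lim_null_comparison[OF _ LW])
    show "eventually (\<lambda>v. norm (D v x - D u x) \<le> L * W v u) ?F"
      using ev by eventually_elim (use Lip[OF u] in auto)
  qed
  have Zu: "?Z u > 0" using Zb(2)[OF U Dm[OF u] Db[OF u], of c] by (meson exp_gt_zero less_le_trans)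
  have sand: "exp (- \<bar>c\<bar> * (L * W v u)) * ?Z u \<le> ?Z v \<and> ?Z v \<le> exp (\<bar>c\<bar> * (L * W v u)) * ?Z u" if v: "v \<ge> 0" for v
  proof -
    have pt: "exp (- \<bar>c\<bar> * (L * W v u)) * exp (c * D u y - U y) \<le> exp (c * D v y - U y) \<and>
              exp (c * D v y - U y) \<le> exp (\<bar>c\<bar> * (L * W v u)) * exp (c * D u y - U y)" for y
    proof -
      have "\<bar>c * (D v y - D u y)\<bar> \<le> \<bar>c\<bar> * (L * W v u)"
        unfolding abs_mult by (rule mult_left_mono[OF Lip[OF u v]]) simp
      then have "- \<bar>c\<bar> * (L * W v u) + (c * D u y - U y) \<le> c * D v y - U y"
        "c * D v y - U y \<le> \<bar>c\<bar> * (L * W v u) + (c * D u y - U y)"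
        by (auto simp: algebra_simps)
      then show ?thesis unfolding exp_add[symmetric] exp_le_cancel_iff by blast
    qed
    note Iu = Zb(1)[OF U Dm[OF u] Db[OF u], of c]
    note Iv = Zb(1)[OF U Dm[OF v] Db[OF v], of c]
    have "exp (- \<bar>c\<bar> * (L * W v u)) * ?Z u = (\<integral>y. exp (- \<bar>c\<bar> * (L * W v u)) * exp (c * D u y - U y) \<partial>lborel)"
      by simp
    also have "\<dots> \<le> ?Z v" using pt by (intro integral_mono Iv integrable_mult_right Iu) auto
    finally have 1: "exp (- \<bar>c\<bar> * (L * W v u)) * ?Z u \<le> ?Z v" .
    have "?Z v \<le> (\<integral>y. exp (\<bar>c\<bar> * (L * W v u)) * exp (c * D u y - U y) \<partial>lborel)"
      using pt by (intro integral_mono Iv integrable_mult_right Iu) auto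
    also have "\<dots> = exp (\<bar>c\<bar> * (L * W v u)) * ?Z u" by simp
    finally show ?thesis using 1 by simp
  qed
  have den: "(?Z \<longlongrightarrow> ?Z u) ?F"
  proof (rule tendsto_sandwich)
    show "eventually (\<lambda>v. exp (- \<bar>c\<bar> * (L * W v u)) * ?Z u \<le> ?Z v) ?F"
      using ev by eventually_elim (use sand in auto)
    show "eventually (\<lambda>v. ?Z v \<le> exp (\<bar>c\<bar> * (L * W v u)) * ?Z u) ?F"
      using ev by eventually_elim (use sand in auto)
    have "((\<lambda>v. exp (- \<bar>c\<bar> * (L * W v u)) * ?Z u) \<longlongrightarrow> exp (- \<bar>c\<bar> * 0) * ?Z u) ?F"
      by (intro tendsto_intros LW)
    then show "((\<lambda>v. exp (- \<bar>c\<bar> * (L * W v u)) * ?Z u) \<longlongrightarrow> ?Z u) ?F" by simp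
    have "((\<lambda>v. exp (\<bar>c\<bar> * (L * W v u)) * ?Z u) \<longlongrightarrow> exp (\<bar>c\<bar> * 0) * ?Z u) ?F"
      by (intro tendsto_intros LW)
    then show "((\<lambda>v. exp (\<bar>c\<bar> * (L * W v u)) * ?Z u) \<longlongrightarrow> ?Z u) ?F" by simp
  qed
  show "((\<lambda>u. exp (c * D u x - U x) / ?Z u) \<longlongrightarrow> exp (c * D u x - U x) / ?Z u) ?F"
    using Zu by (intro tendsto_intros num den) auto
qed

lemma lint_const:
  fixes \<alpha> t C :: real
  assumes "t \<ge> 0"
  shows "(LINT u:{0..t}|lborel. \<alpha> * exp (- \<alpha> * (t - u)) * C) = C * (1 - exp (- \<alpha> * t))"
proof -
  have "(LINT u:{0..t}|lborel. \<alpha> * exp (- \<alpha> * (t - u)) * C) = C * exp (- \<alpha> * (t - t)) - C * exp (- \<alpha> * (t - 0))"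
    unfolding set_lebesgue_integral_def
  proof (rule integral_FTC_atLeastAtMost[OF assms])
    fix x assume "0 \<le> x" "x \<le> t"
    have "((\<lambda>u. C * exp (- \<alpha> * (t - u))) has_real_derivative (\<alpha> * exp (- \<alpha> * (t - x)) * C)) (at x within {0..t})"
      by (auto intro!: derivative_eq_intros)
    then show "((\<lambda>u. C * exp (- \<alpha> * (t - u))) has_vector_derivative (\<alpha> * exp (- \<alpha> * (t - x)) * C)) (at x within {0..t})"
      by (simp add: has_real_derivative_iff_has_vector_derivative)
  next
    show "continuous_on {0..t} (\<lambda>u. \<alpha> * exp (- \<alpha> * (t - u)) * C)"
      by (intro continuous_intros)
  qed
  then show ?thesis by (simp add: algebra_simps)
qed

lemma int_bounds:
  fixes h :: "real \<Rightarrow> real" and \<alpha> t lo hi :: real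
  assumes "\<alpha> > 0" "t \<ge> 0" "continuous_on {0..t} h"
    and b: "\<And>u. u \<in> {0..t} \<Longrightarrow> lo \<le> h u \<and> h u \<le> hi"
  shows "lo * (1 - exp (- \<alpha> * t)) \<le> (LINT u:{0..t}|lborel. \<alpha> * exp (- \<alpha> * (t - u)) * h u)"
    "(LINT u:{0..t}|lborel. \<alpha> * exp (- \<alpha> * (t - u)) * h u) \<le> hi * (1 - exp (- \<alpha> * t))"
proof -
  have i: "set_integrable lborel {0..t} (\<lambda>u. \<alpha> * exp (- \<alpha> * (t - u)) * h u)"
    by (intro borel_integrable_atLeastAtMost' continuous_intros assms(3))
  have ic: "set_integrable lborel {0..t} (\<lambda>u. \<alpha> * exp (- \<alpha> * (t - u)) * C)" for C
    by (intro borel_integrable_atLeastAtMost' continuous_intros)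
  have "lo * (1 - exp (- \<alpha> * t)) = (LINT u:{0..t}|lborel. \<alpha> * exp (- \<alpha> * (t - u)) * lo)"
    by (rule lint_const[OF assms(2), symmetric])
  also have "\<dots> \<le> (LINT u:{0..t}|lborel. \<alpha> * exp (- \<alpha> * (t - u)) * h u)"
    using assms(1) b by (intro set_integral_mono ic i mult_left_mono) auto
  finally show "lo * (1 - exp (- \<alpha> * t)) \<le> (LINT u:{0..t}|lborel. \<alpha> * exp (- \<alpha> * (t - u)) * h u)" .
  have "(LINT u:{0..t}|lborel. \<alpha> * exp (- \<alpha> * (t - u)) * h u) \<le> (LINT u:{0..t}|lborel. \<alpha> * exp (- \<alpha> * (t - u)) * hi)"
    using assms(1) b by (intro set_integral_mono ic i mult_left_mono) auto
  also have "\<dots> = hi * (1 - exp (- \<alpha> * t))"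
    by (rule lint_const[OF assms(2)])
  finally show "(LINT u:{0..t}|lborel. \<alpha> * exp (- \<alpha> * (t - u)) * h u) \<le> hi * (1 - exp (- \<alpha> * t))" .
qed

lemma key_real:
  fixes E \<rho> c2 a h mt :: real
  assumes E: "E > 0" and \<rho>: "\<rho> \<ge> 0" and c2: "c2 \<ge> 1" and a: "a > 0"
    and h: "0 \<le> h" "h \<le> c2 * E" and mt: "a * E \<le> mt" "mt \<le> c2 * E + \<rho>"
  shows "ln (mt / E) * (h - mt) \<le> c2 * (c2 * E + \<rho>) + \<bar>ln a\<bar> * (c2 * E + \<rho>)"
    "- (\<bar>ln a\<bar> * (2 * c2 * E + \<rho>) + 2 * c2 * (c2 * E + \<rho>) + \<rho> * ln (c2 + 1) + \<bar>\<rho> * ln (\<rho> / E)\<bar>)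
       \<le> ln (mt / E) * (h - mt)"
proof -
  define r where "r = mt / E"
  define B where "B = c2 + \<rho> / E"
  have B1: "B \<ge> 1" unfolding B_def using c2 E \<rho> by (simp add: add_increasing2)
  have ra: "r \<ge> a" unfolding r_def using mt(1) E by (simp add: field_simps)
  have rB: "r \<le> B" unfolding r_def B_def using mt(2) E by (simp add: field_simps)
  have rpos: "r > 0" using ra a by simp
  have mtpos: "mt > 0" using mt(1) mult_pos_pos[OF a E] by linarith
  have nn1: "0 \<le> \<bar>ln a\<bar> * (c2 * E + \<rho>)" using E \<rho> c2 by simp
  have nn2: "0 \<le> c2 * (c2 * E + \<rho>)" using E \<rho> c2 by simp
  have nn3: "0 \<le> \<rho> * ln (c2 + 1)" using \<rho> c2 by simp
  have nn6: "0 \<le> \<bar>ln a\<bar> * (2 * c2 * E + \<rho>)" using E \<rho> c2 by simp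
  have nn7: "2 * c2 * (c2 * E + \<rho>) = 2 * (c2 * (c2 * E + \<rho>))" by simp
  have nn4: "0 \<le> \<bar>\<rho> * ln (\<rho> / E)\<bar>" by simp
  have nn5: "\<bar>ln a\<bar> * (c2 * E) \<le> \<bar>ln a\<bar> * (2 * c2 * E + \<rho>)" using E c2 \<rho> by (intro mult_left_mono) auto
  have EB: "E * ln B \<le> c2 * E + \<rho>"
  proof -
    have "ln B \<le> B" using ln_le_minus_one[of B] B1 by linarith
    then have "E * ln B \<le> E * B" using E by simp
    also have "E * B = c2 * E + \<rho>" unfolding B_def using E by (simp add: field_simps)
    finally show ?thesis .
  qed
  have rB2: "\<rho> * ln B \<le> \<rho> * ln (c2 + 1) + \<bar>\<rho> * ln (\<rho> / E)\<bar>"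
  proof (cases "\<rho> / E \<le> 1")
    case True
    have "ln B \<le> ln (c2 + 1)" unfolding B_def using True B1 B_def by simp
    then have "\<rho> * ln B \<le> \<rho> * ln (c2 + 1)" using \<rho> by (simp add: mult_left_mono)
    then show ?thesis by simp
  next
    case False
    then have q: "\<rho> / E > 1" by simp
    have "c2 * 1 \<le> c2 * (\<rho> / E)" using q c2 by (intro mult_left_mono) auto
    then have "B \<le> (c2 + 1) * (\<rho> / E)" unfolding B_def distrib_right by simp
    then have "ln B \<le> ln ((c2 + 1) * (\<rho> / E))" using B1 by simp
    also have "\<dots> = ln (c2 + 1) + ln (\<rho> / E)" by (rule ln_mult_pos) (use q c2 in auto)
    finally have "\<rho> * ln B \<le> \<rho> * (ln (c2 + 1) + ln (\<rho> / E))" using \<rho> by (simp add: mult_left_mono)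
    then show ?thesis by (simp add: algebra_simps)
  qed
  show "ln (mt / E) * (h - mt) \<le> c2 * (c2 * E + \<rho>) + \<bar>ln a\<bar> * (c2 * E + \<rho>)"
  proof (cases "r \<ge> 1")
    case True
    have l0: "0 \<le> ln r" using True by simp
    have lB: "ln r \<le> ln B" using rB rpos by simp
    have "ln r * (h - mt) \<le> ln r * h" using l0 mtpos by (simp add: mult_left_mono)
    also have "\<dots> \<le> ln B * (c2 * E)" using l0 lB h by (intro mult_mono) auto
    also have "\<dots> = c2 * (E * ln B)" by simp
    also have "\<dots> \<le> c2 * (c2 * E + \<rho>)" using EB c2 by (intro mult_left_mono) auto
    finally show ?thesis using nn1 unfolding r_def by linarith
  next
    case False
    have l0: "ln r < 0" using False rpos by simp
    have la: "ln a \<le> ln r" using ra a by simp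
    have "ln r * h \<le> 0" using l0 h by (simp add: mult_nonpos_nonneg)
    then have "ln r * (h - mt) \<le> ln r * (- mt)" by (simp add: right_diff_distrib)
    also have "\<dots> = (- ln r) * mt" by simp
    also have "\<dots> \<le> \<bar>ln a\<bar> * (c2 * E + \<rho>)" using la l0 mt mtpos by (intro mult_mono) auto
    finally show ?thesis using nn2 unfolding r_def by linarith
  qed
  show "- (\<bar>ln a\<bar> * (2 * c2 * E + \<rho>) + 2 * c2 * (c2 * E + \<rho>) + \<rho> * ln (c2 + 1) + \<bar>\<rho> * ln (\<rho> / E)\<bar>)
       \<le> ln (mt / E) * (h - mt)"
  proof (cases "r \<ge> 1")
    case True
    have l0: "0 \<le> ln r" using True by simp
    have lB: "ln r \<le> ln B" using rB rpos by simp
    have "0 \<le> ln r * h" using l0 h by simp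
    then have A: "ln r * (- mt) \<le> ln r * (h - mt)" by (simp add: right_diff_distrib)
    have Bq: "ln r * mt \<le> ln B * (c2 * E + \<rho>)" using l0 lB mt mtpos by (intro mult_mono) auto
    have C: "ln B * (c2 * E + \<rho>) = c2 * (E * ln B) + \<rho> * ln B" by (simp add: algebra_simps)
    have D: "c2 * (E * ln B) \<le> c2 * (c2 * E + \<rho>)" using EB c2 by (intro mult_left_mono) auto
    have "ln r * (- mt) = - (ln r * mt)" by simp
    then show ?thesis using A Bq C D rB2 nn6 nn7 nn2 unfolding r_def by linarith
  next
    case False
    have l0: "ln r < 0" using False rpos by simp
    have la: "ln a \<le> ln r" using ra a by simp
    have "ln r * mt \<le> 0" using l0 mtpos by (simp add: mult_nonpos_nonneg)
    then have A: "ln r * h \<le> ln r * (h - mt)" by (simp add: right_diff_distrib)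
    have Bq: "(- ln r) * h \<le> \<bar>ln a\<bar> * (c2 * E)" using la l0 h by (intro mult_mono) auto
    have "ln r * h = - ((- ln r) * h)" by simp
    then show ?thesis using A Bq nn5 nn2 nn3 nn4 nn7 unfolding r_def by linarith
  qed
qed

lemma rho_facts:
  fixes U \<rho>0 :: "'a::euclidean_space \<Rightarrow> real" and m0 :: "'a measure"
  assumes U: "standing_U p U" and \<rho>m: "\<rho>0 \<in> borel_measurable lborel" and \<rho>nn: "\<forall>x. \<rho>0 x \<ge> 0"
    and m0: "m0 = density lborel (\<lambda>x. ennreal (\<rho>0 x))" and pm: "m0 \<in> probs"
    and fe: "finite_rel_entropy m0 (gmeas U)"
  shows "integrable lborel \<rho>0" "integrable lborel (\<lambda>x. \<rho>0 x * ln (\<rho>0 x / exp (- U x)))"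
proof -
  note E = expU[OF U]
  have Um: "U \<in> borel_measurable lborel" using E(1) by simp
  have ps: "prob_space m0" using pm unfolding probs_def by auto
  have "emeasure m0 (space m0) = 1" using ps by (simp add: prob_space.emeasure_space_1)
  then have n1: "(\<integral>\<^sup>+ x. ennreal (\<rho>0 x) \<partial>lborel) = 1"
    unfolding m0 using \<rho>m by (simp add: emeasure_density)
  show I: "integrable lborel \<rho>0"
    by (rule integrableI_nonneg[OF \<rho>m]) (use \<rho>nn n1 in auto)
  let ?g = "gmeas U"
  have ng: "(\<integral>\<^sup>+ x. ennreal (exp (- U x)) \<partial>lborel) = 1" using U unfolding standing_U_def by auto
  have pg: "prob_space ?g"
    by (rule prob_spaceI) (use Um ng in \<open>simp add: gmeas_def emeasure_density\<close>)
  interpret sigma_finite_measure ?g using pg by (rule prob_space_imp_sigma_finite)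
  have fm: "(\<lambda>x. ennreal (\<rho>0 x / exp (- U x))) \<in> borel_measurable ?g"
    using \<rho>m Um by (simp add: gmeas_def)
  have dd: "density ?g (\<lambda>x. ennreal (\<rho>0 x / exp (- U x))) = m0"
  proof -
    have "density ?g (\<lambda>x. ennreal (\<rho>0 x / exp (- U x)))
        = density lborel (\<lambda>x. ennreal (exp (- U x)) * ennreal (\<rho>0 x / exp (- U x)))"
      unfolding gmeas_def using \<rho>m Um by (intro density_density_eq) auto
    also have "\<dots> = density lborel (\<lambda>x. ennreal (\<rho>0 x))"
    proof (rule density_cong)
      show "(\<lambda>x. ennreal (exp (- U x)) * ennreal (\<rho>0 x / exp (- U x))) \<in> borel_measurable lborel"
        using \<rho>m Um by simp
      show "(\<lambda>x. ennreal (\<rho>0 x)) \<in> borel_measurable lborel" using \<rho>m by simp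
      show "AE x in lborel. ennreal (exp (- U x)) * ennreal (\<rho>0 x / exp (- U x)) = ennreal (\<rho>0 x)"
        using \<rho>nn by (auto simp: ennreal_mult[symmetric])
    qed
    finally show ?thesis using m0 by simp
  qed
  have ae1: "AE x in ?g. ennreal (\<rho>0 x / exp (- U x)) = RN_deriv ?g m0 x"
    by (rule RN_deriv_unique[OF fm dd])
  have ae2: "AE x in lborel. ennreal (\<rho>0 x / exp (- U x)) = RN_deriv ?g m0 x"
    using ae1 Um unfolding gmeas_def by (simp add: AE_density)
  have ae3: "AE x in m0. ln (enn2real (RN_deriv ?g m0 x)) = ln (\<rho>0 x / exp (- U x))"
  proof -
    have "AE x in lborel. 0 < ennreal (\<rho>0 x) \<longrightarrow> ln (enn2real (RN_deriv ?g m0 x)) = ln (\<rho>0 x / exp (- U x))"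
      using ae2 proof eventually_elim
      case (elim x)
      then show ?case using \<rho>nn by (metis divide_nonneg_pos enn2real_ennreal exp_gt_zero)
    qed
    then show ?thesis unfolding m0 using \<rho>m by (simp add: AE_density)
  qed
  have i0: "integrable m0 (\<lambda>x. ln (enn2real (RN_deriv ?g m0 x)))" using fe unfolding finite_rel_entropy_def by auto
  have i1: "integrable m0 (\<lambda>x. ln (\<rho>0 x / exp (- U x)))"
    by (rule integrable_cong_AE_imp[OF i0 _ ae3]) (use \<rho>m Um in \<open>simp add: m0\<close>)
  then have "integrable lborel (\<lambda>x. \<rho>0 x *\<^sub>R ln (\<rho>0 x / exp (- U x)))"
    unfolding m0 using \<rho>m Um \<rho>nn by (subst integrable_density[symmetric]) auto
  then show "integrable lborel (\<lambda>x. \<rho>0 x * ln (\<rho>0 x / exp (- U x)))" by simp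
qed

theorem lemma20:
  fixes p p' \<sigma> \<alpha> s :: real
    and F :: "'a::euclidean_space measure \<Rightarrow> real"
    and dF :: "'a measure \<Rightarrow> 'a \<Rightarrow> real"
    and U :: "'a \<Rightarrow> real"
    and m :: "real \<Rightarrow> 'a measure"
    and \<rho>0 :: "'a \<Rightarrow> real"
  assumes "p \<ge> 1" and "\<sigma> > 0" and "\<alpha> > 0"
    and "standing_F p F dF"
    and "standing_U p U"
    and "\<exists>!\<mu>. \<mu> \<in> probs_q p \<and> Phi \<sigma> dF U \<mu> = \<mu>"
    and "p' > p" and "m 0 \<in> probs_q p'"
    and "finite_rel_entropy (m 0) (gmeas U)"
    and "\<rho>0 \<in> borel_measurable lborel" and "\<forall>x. \<rho>0 x \<ge> 0"
    and "m 0 = density lborel (\<lambda>x. ennreal (\<rho>0 x))"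
    and "efp_solution p \<sigma> \<alpha> dF U m"
    and "s > 0"
  shows "\<exists>f g0 :: 'a \<Rightarrow> real. integrable lborel f \<and> integrable lborel g0 \<and>
    (\<forall>t\<ge>s. \<forall>x.
       g0 x \<le> ln (efp_dens \<sigma> \<alpha> dF U m \<rho>0 t x / exp (- U x))
               * (Phi_dens \<sigma> dF U (m t) x - efp_dens \<sigma> \<alpha> dF U m \<rho>0 t x)
     \<and> ln (efp_dens \<sigma> \<alpha> dF U m \<rho>0 t x / exp (- U x))
               * (Phi_dens \<sigma> dF U (m t) x - efp_dens \<sigma> \<alpha> dF U m \<rho>0 t x) \<le> f x)"
proof -
  obtain L M where L: "L > 0" and M: "M > 0"
    and Lip: "\<forall>m\<in>probs. \<forall>m'\<in>probs. \<forall>x x'. wass_cost p m m' < \<infinity> \<longrightarrow>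
              \<bar>dF m x - dF m' x'\<bar> \<le> L * (Wp p m m' + dist x x')"
    and Mb: "\<forall>m\<in>probs. \<forall>x. \<bar>dF m x\<bar> \<le> M"
    using assms(4) unfolding standing_F_def by blast
  have sol: "\<And>t. t \<ge> 0 \<Longrightarrow> m t \<in> probs_q p"
    and cont: "\<And>t \<epsilon>. t \<ge> 0 \<Longrightarrow> \<epsilon> > 0 \<Longrightarrow> \<exists>\<delta>>0. \<forall>t'\<ge>0. \<bar>t' - t\<bar> < \<delta> \<longrightarrow> Wp p (m t') (m t) < \<epsilon>"
    using assms(13) unfolding efp_solution_def by blast+
  have mP: "\<And>t. t \<ge> 0 \<Longrightarrow> m t \<in> probs" using sol unfolding probs_q_def by blast
  have p0: "p > 0" using assms(1) by simp
  define c where "c = - 2 / \<sigma>\<^sup>2"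
  define c1 where "c1 = exp (- 2 * \<bar>c\<bar> * M)"
  define c2 where "c2 = exp (2 * \<bar>c\<bar> * M)"
  define a where "a = c1 * (1 - exp (- \<alpha> * s))"
  have c1p: "c1 > 0" unfolding c1_def by simp
  have c2g: "c2 \<ge> 1" unfolding c2_def using M by simp
  have ap: "a > 0" unfolding a_def using c1p assms(3,14) by simp
  have Dm: "\<And>u. u \<ge> 0 \<Longrightarrow> dF (m u) \<in> borel_measurable borel"
    using dF_cont[OF assms(4) mP] by (simp add: borel_measurable_continuous_onI)
  have Db: "\<And>u y. u \<ge> 0 \<Longrightarrow> \<bar>dF (m u) y\<bar> \<le> M" using Mb mP by blast
  have hb: "\<And>u x. u \<ge> 0 \<Longrightarrow> c1 * exp (- U x) \<le> Phi_dens \<sigma> dF U (m u) x \<and> Phi_dens \<sigma> dF U (m u) x \<le> c2 * exp (- U x)"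
  proof -
    fix u :: real and x assume u: "u \<ge> 0"
    show "c1 * exp (- U x) \<le> Phi_dens \<sigma> dF U (m u) x \<and> Phi_dens \<sigma> dF U (m u) x \<le> c2 * exp (- U x)"
      using Phib[where dF=dF and \<mu>="m u" and \<sigma>=\<sigma> and x=x, OF assms(5) Dm[OF u] Db[OF u]] unfolding c1_def c2_def c_def by blast
  qed
  have LipD: "\<And>u v y. u \<ge> 0 \<Longrightarrow> v \<ge> 0 \<Longrightarrow> \<bar>dF (m v) y - dF (m u) y\<bar> \<le> L * Wp p (m v) (m u)"
  proof -
    fix u v :: real and y assume u: "u \<ge> 0" and v: "v \<ge> 0"
    have "wass_cost p (m v) (m u) < \<infinity>" by (rule wass_fin[OF sol[OF v] sol[OF u] p0])
    then show "\<bar>dF (m v) y - dF (m u) y\<bar> \<le> L * Wp p (m v) (m u)"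
      using Lip mP[OF u] mP[OF v] by (metis dist_self add_0_right)
  qed
  have Wt: "\<And>u. u \<ge> 0 \<Longrightarrow> ((\<lambda>v. Wp p (m v) (m u)) \<longlongrightarrow> 0) (at u within {0..})"
  proof -
    fix u :: real assume u: "u \<ge> 0"
    show "((\<lambda>v. Wp p (m v) (m u)) \<longlongrightarrow> 0) (at u within {0..})"
    proof (rule tendstoI)
      fix e :: real assume e: "e > 0"
      obtain d where d: "d > 0" "\<forall>t'\<ge>0. \<bar>t' - u\<bar> < d \<longrightarrow> Wp p (m t') (m u) < e"
        using cont[OF u e] by blast
      show "eventually (\<lambda>v. dist (Wp p (m v) (m u)) 0 < e) (at u within {0..})"
        unfolding eventually_at
      proof (intro exI[of _ d] conjI ballI impI)
        fix v assume "v \<in> {0..}" "v \<noteq> u \<and> dist v u < d"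
        then show "dist (Wp p (m v) (m u)) 0 < e" using d by (auto simp: Wp_def dist_real_def)
      qed (use d in auto)
    qed
  qed
  have hcont: "continuous_on {0..} (\<lambda>u. Phi_dens \<sigma> dF U (m u) x)" for x
    using cont_h[OF assms(5) Dm Db LipD less_imp_le[OF L] Wt, where x=x and c=c]
    unfolding Phi_dens_def c_def by simp
  note rf = rho_facts[OF assms(5,10,11,12) mP[of 0] assms(9)]
  note E = expU[OF assms(5)]
  define f where "f x = c2 * (c2 * exp (- U x) + \<rho>0 x) + \<bar>ln a\<bar> * (c2 * exp (- U x) + \<rho>0 x)" for x
  define g0 where "g0 x = - (\<bar>ln a\<bar> * (2 * c2 * exp (- U x) + \<rho>0 x) + 2 * c2 * (c2 * exp (- U x) + \<rho>0 x)
      + \<rho>0 x * ln (c2 + 1) + \<bar>\<rho>0 x * ln (\<rho>0 x / exp (- U x))\<bar>)" for x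
  have fi: "integrable lborel f" unfolding f_def
    using E(2) rf by auto
  have gi: "integrable lborel g0" unfolding g0_def
    using E(2) rf by auto
  have bnd: "g0 x \<le> ln (efp_dens \<sigma> \<alpha> dF U m \<rho>0 t x / exp (- U x))
               * (Phi_dens \<sigma> dF U (m t) x - efp_dens \<sigma> \<alpha> dF U m \<rho>0 t x)
     \<and> ln (efp_dens \<sigma> \<alpha> dF U m \<rho>0 t x / exp (- U x))
               * (Phi_dens \<sigma> dF U (m t) x - efp_dens \<sigma> \<alpha> dF U m \<rho>0 t x) \<le> f x"
    if t: "t \<ge> s" for t x
  proof -
    have t0: "t \<ge> 0" using t assms(14) by simp
    let ?E = "exp (- U x)"
    let ?I = "LINT u:{0..t}|lborel. \<alpha> * exp (- \<alpha> * (t - u)) * Phi_dens \<sigma> dF U (m u) x"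
    have ib: "c1 * ?E * (1 - exp (- \<alpha> * t)) \<le> ?I" "?I \<le> c2 * ?E * (1 - exp (- \<alpha> * t))"
      using int_bounds[OF assms(3) t0 continuous_on_subset[OF hcont[of x]], of "c1 * ?E" "c2 * ?E"] hb
      by auto
    have md: "efp_dens \<sigma> \<alpha> dF U m \<rho>0 t x = ?I + exp (- \<alpha> * t) * \<rho>0 x"
      unfolding efp_dens_def by simp
    have et: "exp (- \<alpha> * t) \<le> exp (- \<alpha> * s)" using t assms(3) by simp
    have et1: "exp (- \<alpha> * t) \<le> 1" using t0 assms(3) by simp
    have Ep: "?E > 0" by simp
    have r0: "\<rho>0 x \<ge> 0" using assms(11) by simp
    have lo: "a * ?E \<le> efp_dens \<sigma> \<alpha> dF U m \<rho>0 t x"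
    proof -
      have "a * ?E = c1 * ?E * (1 - exp (- \<alpha> * s))" unfolding a_def by simp
      also have "\<dots> \<le> c1 * ?E * (1 - exp (- \<alpha> * t))" using et c1p Ep by (intro mult_left_mono) auto
      also have "\<dots> \<le> ?I" by (rule ib(1))
      also have "\<dots> \<le> efp_dens \<sigma> \<alpha> dF U m \<rho>0 t x" using md r0 by simp
      finally show ?thesis .
    qed
    have up: "efp_dens \<sigma> \<alpha> dF U m \<rho>0 t x \<le> c2 * ?E + \<rho>0 x"
    proof -
      have "c2 * ?E * (1 - exp (- \<alpha> * t)) \<le> c2 * ?E" using c2g Ep by (simp add: mult_left_le)
      moreover have "exp (- \<alpha> * t) * \<rho>0 x \<le> \<rho>0 x" using et1 r0 by (simp add: mult_left_le_one_le)
      ultimately show ?thesis using md ib(2) by linarith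
    qed
    have hh: "0 \<le> Phi_dens \<sigma> dF U (m t) x" "Phi_dens \<sigma> dF U (m t) x \<le> c2 * ?E"
      using hb[OF t0, of x] c1p Ep by (auto intro: order_trans[rotated])
    note k = key_real[OF Ep r0 c2g ap hh lo up]
    show ?thesis using k unfolding f_def g0_def by simp
  qed
  show ?thesis using fi gi bnd by blast
qed

end
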